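(* Let $K$ be a field, $c\in K\setminus\{0\}$, $n\ge1$, and let $f,g$ be $c$-friezes of order $n$ over $K$. If there is $a\in\mathbb{Z}$ such that $f(a+m,a+m)=g(a+m,a+m)$ for $m=0,1,\dots,n+2$ (i.e. $f$ and $g$ agree on $n+3$ consecutive elements of the first row), then $f=g$.
   Context: The $c$-continuant polynomials $P_k=P_k^c$ ($k\ge-1$) are defined by $P_{-1}=0$, $P_0=1$, and for $k\ge1$, $P_k(x_1,\dots,x_k)=x_kP_{k-1}(x_1,\dots,x_{k-1})+cP_{k-2}(x_1,\dots,x_{k-2})$. A family $(x_i)_{i\in\mathbb{Z}}$ in $K$ is $n$-admissible if $P_{n+2}(x_i,\dots,x_{i+n+1})=0$ for all $i$. Let $\mathbb{B}_n=\{(i,j)\in\mathbb{Z}^2:-2\le j-i\le n+1\}$. A $c$-frieze of order $n$ is a function $f:\mathbb{B}_n\to K$ for which there is an $n$-admissible family $(x_i)$ with $f(i,j)=P_{j-i+1}(x_i,\dots,x_j)$ for all $(i,j)\in\mathbb{B}_n$; its first row consists of the values $f(i,i)=x_i$. *)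

theory Defs
  imports Main
begin

text \<open>cont c x i k = P_k(x_i, x_(i+1), ..., x_(i+k-1)) for k \<ge> 0 (c-continuant).\<close>
fun cont :: "'a::field \<Rightarrow> (int \<Rightarrow> 'a) \<Rightarrow> int \<Rightarrow> nat \<Rightarrow> 'a" where
  "cont c x i 0 = 1"
| "cont c x i (Suc 0) = x i"
| "cont c x i (Suc (Suc k)) = x (i + int k + 1) * cont c x i (Suc k) + c * cont c x i k"

definition contI :: "'a::field \<Rightarrow> (int \<Rightarrow> 'a) \<Rightarrow> int \<Rightarrow> int \<Rightarrow> 'a" where
  "contI c x i k = (if k < 0 then 0 else cont c x i (nat k))"

definition admissible :: "'a::field \<Rightarrow> nat \<Rightarrow> (int \<Rightarrow> 'a) \<Rightarrow> bool" where
  "admissible c n x \<longleftrightarrow> (\<forall>i. cont c x i (n + 2) = 0)"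

definition frieze_domain :: "nat \<Rightarrow> (int \<times> int) set" where
  "frieze_domain n = {(i, j). -2 \<le> j - i \<and> j - i \<le> int n + 1}"

definition is_frieze :: "'a::field \<Rightarrow> nat \<Rightarrow> (int \<times> int \<Rightarrow> 'a) \<Rightarrow> bool" where
  "is_frieze c n f \<longleftrightarrow> (\<exists>x. admissible c n x \<and>
      (\<forall>i j. (i, j) \<in> frieze_domain n \<longrightarrow> f (i, j) = contI c x i (j - i + 1)))"

end

theory Submission
  imports Defs
begin

lemma cont_cong: "(\<forall>j. i \<le> j \<and> j < i + int k \<longrightarrow> x j = y j) \<Longrightarrow> cont c x i k = cont c y i k"
proof (induction c x i k rule: cont.induct)
  case (1 c x i) then show ?case by simp
next
  case (2 c x i) then show ?case by simp
next
  case (3 c x i k)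
  have a: "cont c x i (Suc k) = cont c y i (Suc k)" using 3 by auto
  have b: "cont c x i k = cont c y i k" using 3 by auto
  have d: "x (i + int k + 1) = y (i + int k + 1)" using "3.prems" by auto
  show ?case using a b d by simp
qed

lemma cont_left: "cont c x i (Suc (Suc k)) = x i * cont c x (i+1) (Suc k) + c * cont c x (i+2) k"
proof (induction k rule: less_induct)
  case (less k)
  show ?case
  proof (cases k)
    case 0 then show ?thesis by (simp add: algebra_simps)
  next
    case (Suc k1)
    show ?thesis
    proof (cases k1)
      case 0 then show ?thesis using Suc by (simp add: algebra_simps)
    next
      case (Suc k2)
      have IH1: "cont c x i (Suc (Suc k1)) = x i * cont c x (i+1) (Suc k1) + c * cont c x (i+2) k1"
        using less \<open>k = Suc k1\<close> by auto
      have IH2: "cont c x i (Suc (Suc k2)) = x i * cont c x (i+1) (Suc k2) + c * cont c x (i+2) k2"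
        using less \<open>k = Suc k1\<close> Suc by auto
      have e7: "cont c x i (Suc (Suc (Suc (Suc k2)))) = x (i + int k2 + 3) * cont c x i (Suc (Suc (Suc k2))) + c * cont c x i (Suc (Suc k2))"
        by (simp add: algebra_simps)
      have e5: "cont c x (i+1) (Suc (Suc (Suc k2))) = x (i + int k2 + 3) * cont c x (i+1) (Suc (Suc k2)) + c * cont c x (i+1) (Suc k2)"
        by (simp add: algebra_simps)
      have e8: "cont c x (i+2) (Suc (Suc k2)) = x (i + int k2 + 3) * cont c x (i+2) (Suc k2) + c * cont c x (i+2) k2"
        by (simp add: algebra_simps)
      have IH1': "cont c x i (Suc (Suc (Suc k2))) = x i * cont c x (i+1) (Suc (Suc k2)) + c * cont c x (i+2) (Suc k2)"
        using IH1 Suc by simp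
      have "cont c x i (Suc (Suc (Suc (Suc k2)))) = x i * cont c x (i+1) (Suc (Suc (Suc k2))) + c * cont c x (i+2) (Suc (Suc k2))"
        unfolding e7 e5 e8 IH1' IH2 by (simp add: algebra_simps)
      then show ?thesis using \<open>k = Suc k1\<close> Suc by simp
    qed
  qed
qed

lemma cont_det: "cont c x i (Suc (Suc k)) * cont c x (i+1) k - cont c x i (Suc k) * cont c x (i+1) (Suc k) = c * (-c)^k"
proof (induction k)
  case 0 then show ?case by (simp add: algebra_simps)
next
  case (Suc k)
  have a: "cont c x i (Suc (Suc (Suc k))) = x (i + int k + 2) * cont c x i (Suc (Suc k)) + c * cont c x i (Suc k)"
    by (simp add: algebra_simps)
  have b: "cont c x (i+1) (Suc (Suc k)) = x (i + int k + 2) * cont c x (i+1) (Suc k) + c * cont c x (i+1) k"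
    by (simp add: algebra_simps)
  have "cont c x i (Suc (Suc (Suc k))) * cont c x (i+1) (Suc k) - cont c x i (Suc (Suc k)) * cont c x (i+1) (Suc (Suc k))
     = - c * (cont c x i (Suc (Suc k)) * cont c x (i+1) k - cont c x i (Suc k) * cont c x (i+1) (Suc k))"
    unfolding a b by (simp add: algebra_simps)
  also have "\<dots> = c * (-c)^(Suc k)" using Suc by simp
  finally show ?case .
qed

lemma adm_nz:
  assumes "admissible c n x" "c \<noteq> 0"
  shows "cont c x i (Suc n) \<noteq> 0" "cont c x (i+1) (Suc n) \<noteq> 0"
proof -
  have z: "cont c x i (Suc (Suc n)) = 0" using assms(1) unfolding admissible_def
    by (simp add: numeral_2_eq_2)
  have "- cont c x i (Suc n) * cont c x (i+1) (Suc n) = c * (-c)^n" using cont_det[of c x i n] z by simp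
  moreover have "c * (-c)^n \<noteq> 0" using assms(2) by simp
  ultimately show "cont c x i (Suc n) \<noteq> 0" "cont c x (i+1) (Suc n) \<noteq> 0" by auto
qed

lemma fwd:
  assumes "admissible c n x" "admissible c n y" "c \<noteq> 0"
    and "\<forall>j. i \<le> j \<and> j \<le> i + int n \<longrightarrow> x j = y j"
  shows "x (i + int n + 1) = y (i + int n + 1)"
proof -
  have zx: "cont c x i (Suc (Suc n)) = 0" using assms(1) unfolding admissible_def by (simp add: numeral_2_eq_2)
  have zy: "cont c y i (Suc (Suc n)) = 0" using assms(2) unfolding admissible_def by (simp add: numeral_2_eq_2)
  have e1: "cont c x i (Suc n) = cont c y i (Suc n)" by (rule cont_cong) (use assms(4) in auto)
  have e2: "cont c x i n = cont c y i n" by (rule cont_cong) (use assms(4) in auto)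
  have nz: "cont c x i (Suc n) \<noteq> 0" using adm_nz assms by blast
  have hx: "x (i + int n + 1) * cont c x i (Suc n) + c * cont c x i n = 0" using zx by simp
  have hy: "y (i + int n + 1) * cont c x i (Suc n) + c * cont c x i n = 0" using zy e1 e2 by simp
  have "x (i + int n + 1) * cont c x i (Suc n) + c * cont c x i n = y (i + int n + 1) * cont c x i (Suc n) + c * cont c x i n"
    using hx hy by simp
  then have "x (i + int n + 1) * cont c x i (Suc n) = y (i + int n + 1) * cont c x i (Suc n)" by simp
  then show ?thesis using nz by simp
qed

lemma bwd:
  assumes "admissible c n x" "admissible c n y" "c \<noteq> 0"
    and "\<forall>j. i + 1 \<le> j \<and> j \<le> i + int n + 1 \<longrightarrow> x j = y j"
  shows "x i = y i"
proof -
  have zx: "cont c x i (Suc (Suc n)) = 0" using assms(1) unfolding admissible_def by (simp add: numeral_2_eq_2)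
  have zy: "cont c y i (Suc (Suc n)) = 0" using assms(2) unfolding admissible_def by (simp add: numeral_2_eq_2)
  have e1: "cont c x (i+1) (Suc n) = cont c y (i+1) (Suc n)" by (rule cont_cong) (use assms(4) in auto)
  have e2: "cont c x (i+2) n = cont c y (i+2) n" by (rule cont_cong) (use assms(4) in auto)
  have nz: "cont c x (i+1) (Suc n) \<noteq> 0" using adm_nz assms by blast
  have hx: "x i * cont c x (i+1) (Suc n) + c * cont c x (i+2) n = 0" using zx cont_left[of c x i n] by simp
  have hy: "y i * cont c x (i+1) (Suc n) + c * cont c x (i+2) n = 0" using zy e1 e2 cont_left[of c y i n] by simp
  have "x i * cont c x (i+1) (Suc n) + c * cont c x (i+2) n = y i * cont c x (i+1) (Suc n) + c * cont c x (i+2) n"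
    using hx hy by simp
  then have "x i * cont c x (i+1) (Suc n) = y i * cont c x (i+1) (Suc n)" by simp
  then show ?thesis using nz by simp
qed

lemma all_eq:
  assumes "admissible c n x" "admissible c n y" "c \<noteq> 0"
    and "\<forall>j. a \<le> j \<and> j \<le> a + int n \<longrightarrow> x j = y j"
  shows "x = y"
proof -
  have F: "\<forall>j. a \<le> j \<and> j \<le> a + int n + int m \<longrightarrow> x j = y j" for m
  proof (induction m)
    case 0 then show ?case using assms(4) by simp
  next
    case (Suc m)
    have xe: "x (a + int m + int n + 1) = y (a + int m + int n + 1)"
      by (rule fwd[OF assms(1-3)]) (use Suc in auto)
    show ?case
    proof (intro allI impI)
      fix j assume j: "a \<le> j \<and> j \<le> a + int n + int (Suc m)"
      show "x j = y j"
      proof (cases "j = a + int m + int n + 1")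
        case True then show ?thesis using xe by simp
      next
        case False then show ?thesis using Suc j by auto
      qed
    qed
  qed
  have B: "\<forall>j. a - int m \<le> j \<and> j \<le> a + int n \<longrightarrow> x j = y j" for m
  proof (induction m)
    case 0 then show ?case using assms(4) by simp
  next
    case (Suc m)
    have xe: "x (a - int m - 1) = y (a - int m - 1)"
      by (rule bwd[OF assms(1-3)]) (use Suc in auto)
    show ?case
    proof (intro allI impI)
      fix j assume j: "a - int (Suc m) \<le> j \<and> j \<le> a + int n"
      show "x j = y j"
      proof (cases "j = a - int m - 1")
        case True then show ?thesis using xe by simp
      next
        case False then show ?thesis using Suc j by auto
      qed
    qed
  qed
  show ?thesis
  proof
    fix j
    show "x j = y j"
    proof (cases "j \<ge> a")
      case True
      then show ?thesis using F[of "nat (j - a)"] by auto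
    next
      case False
      then show ?thesis using B[of "nat (a - j)"] by auto
    qed
  qed
qed

theorem mainTheorem12:
  fixes c :: "'a::field" and n :: nat and f g :: "int \<times> int \<Rightarrow> 'a" and a :: int
  assumes "c \<noteq> 0" and "n \<ge> 1"
    and "is_frieze c n f" and "is_frieze c n g"
    and "\<forall>m::nat. m \<le> n + 2 \<longrightarrow> f (a + int m, a + int m) = g (a + int m, a + int m)"
  shows "\<forall>p \<in> frieze_domain n. f p = g p"
proof -
  obtain x where x: "admissible c n x" "\<forall>i j. (i, j) \<in> frieze_domain n \<longrightarrow> f (i, j) = contI c x i (j - i + 1)"
    using assms(3) unfolding is_frieze_def by blast
  obtain y where y: "admissible c n y" "\<forall>i j. (i, j) \<in> frieze_domain n \<longrightarrow> g (i, j) = contI c y i (j - i + 1)"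
    using assms(4) unfolding is_frieze_def by blast
  have dom: "(i, i) \<in> frieze_domain n" for i by (simp add: frieze_domain_def)
  have fx: "f (i, i) = x i" for i using x(2) dom[of i] by (simp add: contI_def)
  have gy: "g (i, i) = y i" for i using y(2) dom[of i] by (simp add: contI_def)
  have w: "\<forall>j. a \<le> j \<and> j \<le> a + int n \<longrightarrow> x j = y j"
  proof (intro allI impI)
    fix j assume j: "a \<le> j \<and> j \<le> a + int n"
    have "f (a + int (nat (j - a)), a + int (nat (j - a))) = g (a + int (nat (j - a)), a + int (nat (j - a)))"
    proof -
      have "nat (j - a) \<le> n + 2" using j by linarith
      then show ?thesis using assms(5) by blast
    qed
    moreover have "a + int (nat (j - a)) = j" using j by simp
    ultimately show "x j = y j" using fx gy by simp
  qed
  have "x = y" by (rule all_eq[OF x(1) y(1) assms(1) w])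
  then show ?thesis using x(2) y(2) by auto
qed

end
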